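(* Let $M$ be a finitely presented $n$-parameter persistence module with minimal free resolution $(F_\bullet,p_\bullet)$ and fixed decomposition isomorphisms as described in the context. If $\vec r\in\xi_1(M)$ (a generator of $F_1$), then $\vec r^{\mathcal L_{\vec r}}\notin\ker p_1^{\mathcal L_{\vec r}}$, and so $\vec r$ kills a bar in $M^{\mathcal L_{\vec r}}\cong_\phi\bigoplus_{j}\mathds 1^{I_j}$.
   Context: Modules are $\mathbb{R}^n$-graded modules over $P_n$ (monoid ring over a field of $([0,\infty)^n,+)$); $\xi_1(M)$ denotes the generators (with their grades) of $F_1$ in a minimal free resolution. For $\vec a\in\mathbb{R}^n$, $\mathcal L_{\vec a}$ is the line $t\mapsto\vec a+t\vec1$. For a positively sloped line $\mathcal L$ with order-preserving $\|\cdot\|_\infty$-isometric parametrization $\iota$, $M^{\mathcal L}=M\circ\iota$, and $(F^{\mathcal L}_\bullet,p^{\mathcal L}_\bullet)$ is the induced free resolution of $M^{\mathcal L}$ (pullback along $\iota$): generator $\vec a$ of $F_i$ corresponds to $\vec a^{\mathcal L}$ of grade $\iota^{-1}(\mathrm{push}_{\mathcal L}(\mathrm{gr}\,\vec a))$, where $\mathrm{push}_{\mathcal L}(\vec p)=\min\{\vec q\in\mathcal L:\vec q\ge\vec p\}$. For each $\mathcal L$ fix an isomorphism $\phi:M^{\mathcal L}\to\bigoplus_{j}\mathds 1^{I_j}$, $I_j=[b_j,d_j)$ (possibly empty), with as many summands as generators of $F_0$. The canonical resolution $F'_\bullet$ of $\bigoplus\mathds 1^{I_j}$ has $F'_0$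 free on $\{b_j\}$, $F'_1$ free on $\{d_j:d_j\ne\infty\}$, $d_j\mapsto x^{d_j-b_j}b_j$; $\phi$ lifts to a chain map $\phi_\bullet:F^{\mathcal L}_\bullet\to F'_\bullet$. A generator $\vec r$ of $F_1$ kills the bar $I_j$ if $\mathrm{gr}(\vec r^{\mathcal L})=d_j$ and the coefficient of $d_j$ in $\phi_1(\vec r^{\mathcal L})$ is nonzero (generating a bar is defined analogously with $\phi_0$). The isomorphisms are fixed so that each bar is generated by a unique generator of $F^{\mathcal L}_0$ and killed by a unique generator of $F^{\mathcal L}_1$, and every generator of $F^{\mathcal L}_0$ generates some bar. *)

theory Defs
  imports "HOL-Analysis.Analysis"
begin

text \<open>A finitely generated free graded module (over P_n when the grade type is real^'n,
 over P_1 when the grade type is real) is given by a finite set of basis indices together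
 with the grade of each basis element (a generator).  Its homogeneous component at grade t
 is the k-vector space with basis the elements x^(t - gr b) b for generators b with gr b <= t;
 we represent an element of this component by its coordinate function nat => 'k.  In these
 coordinates the structure maps F(s) -> F(t), s <= t (multiplication by x^(t-s)) are the
 inclusions.\<close>

record 'g free_mod =
  basis :: "nat set"
  grade :: "nat \<Rightarrow> 'g"

definition free_ok :: "('g::ord) free_mod \<Rightarrow> bool" where
  "free_ok F \<longleftrightarrow> finite (basis F)"

definition fcomp :: "('g::ord) free_mod \<Rightarrow> 'g \<Rightarrow> (nat \<Rightarrow> 'k::zero) set" where
  "fcomp F t = {v. \<forall>i. v i \<noteq> 0 \<longrightarrow> i \<in> basis F \<and> grade F i \<le> t}"

text \<open>Degree-t component of m F, where m is the ideal of P_n spanned by the monomials x^v, v \<noteq> 0: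
 spanned by the x^(t - gr b) b with gr b <= t and gr b \<noteq> t.\<close>
definition mcomp :: "('g::ord) free_mod \<Rightarrow> 'g \<Rightarrow> (nat \<Rightarrow> 'k::zero) set" where
  "mcomp F t = {v. \<forall>i. v i \<noteq> 0 \<longrightarrow> i \<in> basis F \<and> grade F i \<le> t \<and> grade F i \<noteq> t}"

definition gen :: "nat \<Rightarrow> nat \<Rightarrow> 'k::{zero,one}" where
  "gen j = (\<lambda>i. if i = j then 1 else 0)"

text \<open>A graded (degree preserving) homomorphism F -> G of free modules is determined by a
 scalar matrix C: generator j of F is sent to sum_i C i j x^(gr j - gr i) (generator i of G),
 which requires C i j \<noteq> 0 only if gr i <= gr j.\<close>
definition is_fhom :: "('g::ord) free_mod \<Rightarrow> 'g free_mod \<Rightarrow> (nat \<Rightarrow> nat \<Rightarrow> 'k::zero) \<Rightarrow> bool" where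
  "is_fhom F G C \<longleftrightarrow>
     (\<forall>i j. C i j \<noteq> 0 \<longrightarrow> i \<in> basis G \<and> j \<in> basis F \<and> grade G i \<le> grade F j)"

definition happ :: "('g::ord) free_mod \<Rightarrow> (nat \<Rightarrow> nat \<Rightarrow> 'k::comm_ring_1) \<Rightarrow> (nat \<Rightarrow> 'k) \<Rightarrow> (nat \<Rightarrow> 'k)" where
  "happ F C v = (\<lambda>i. \<Sum>j\<in>basis F. C i j * v j)"

definition hker :: "('g::ord) free_mod \<Rightarrow> (nat \<Rightarrow> nat \<Rightarrow> 'k::comm_ring_1) \<Rightarrow> 'g \<Rightarrow> (nat \<Rightarrow> 'k) set" where
  "hker F C t = {v \<in> fcomp F t. \<forall>i. happ F C v i = 0}"

definition himg :: "('g::ord) free_mod \<Rightarrow> (nat \<Rightarrow> nat \<Rightarrow> 'k::comm_ring_1) \<Rightarrow> 'g \<Rightarrow> (nat \<Rightarrow> 'k) set" where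
  "himg F C t = happ F C ` fcomp F t"

definition min_free_res ::
  "(nat \<Rightarrow> ('g::ord) free_mod) \<Rightarrow> (nat \<Rightarrow> nat \<Rightarrow> nat \<Rightarrow> 'k::field) \<Rightarrow> bool" where
  "min_free_res F p \<longleftrightarrow>
     (\<forall>i. free_ok (F i)) \<and>
     (\<forall>i\<ge>1. is_fhom (F i) (F (i - 1)) (p i)) \<and>
     (\<forall>i\<ge>1. \<forall>t. hker (F i) (p i) t = himg (F (i + 1)) (p (i + 1)) t) \<and>
     (\<forall>i\<ge>1. \<forall>t. himg (F i) (p i) t \<subseteq> mcomp (F (i - 1)) t)"

definition ones :: "real^'n" where
  "ones = (\<chi> i. 1)"

definition lineL :: "real^'n \<Rightarrow> real \<Rightarrow> real^'n" where
  "lineL a t = a + t *\<^sub>R ones"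

text \<open>iota^(-1)(push_L(p)), where push_L(p) = min {q \<in> L : q >= p}.\<close>
definition push_par :: "real^'n \<Rightarrow> real^'n \<Rightarrow> real" where
  "push_par a p = (LEAST t. p \<le> lineL a t)"

text \<open>The induced free module F^L (pullback along iota); the matrices of the maps are unchanged.\<close>
definition restr :: "real^'n \<Rightarrow> (real^'n) free_mod \<Rightarrow> real free_mod" where
  "restr a F = \<lparr>basis = basis F, grade = (\<lambda>i. push_par a (grade F i))\<rparr>"

text \<open>Bars I_j = [b j, d j), j \<in> J, where d j = None means d_j = \<infinity>.\<close>
definition in_bar :: "(nat \<Rightarrow> real) \<Rightarrow> (nat \<Rightarrow> real option) \<Rightarrow> nat \<Rightarrow> real \<Rightarrow> bool" where
  "in_bar b d j t \<longleftrightarrow> b j \<le> t \<and> (case d j of None \<Rightarrow> True | Some e \<Rightarrow> t < e)"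

text \<open>Component at t of the direct sum of the interval modules 1^{I_j}, j \<in> J.\<close>
definition bcomp :: "nat set \<Rightarrow> (nat \<Rightarrow> real) \<Rightarrow> (nat \<Rightarrow> real option) \<Rightarrow> real \<Rightarrow> (nat \<Rightarrow> 'k::zero) set" where
  "bcomp J b d t = {w. \<forall>j. w j \<noteq> 0 \<longrightarrow> j \<in> J \<and> in_bar b d j t}"

text \<open>Structure map (s <= t) of the direct sum of interval modules (evaluated at target t).\<close>
definition bmap :: "(nat \<Rightarrow> real) \<Rightarrow> (nat \<Rightarrow> real option) \<Rightarrow> real \<Rightarrow> (nat \<Rightarrow> 'k::zero) \<Rightarrow> (nat \<Rightarrow> 'k)" where
  "bmap b d t w = (\<lambda>j. if in_bar b d j t then w j else 0)"

text \<open>Canonical resolution F' : F'_0 free on {b_j}, F'_1 free on {d_j : d_j \<noteq> \<infinity>},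
 d_j |-> x^(d_j - b_j) b_j; augmentation F'_0 -> direct sum sends b_j to the generator of 1^{I_j}.\<close>
definition canon0 :: "nat set \<Rightarrow> (nat \<Rightarrow> real) \<Rightarrow> real free_mod" where
  "canon0 J b = \<lparr>basis = J, grade = b\<rparr>"

definition canon1 :: "nat set \<Rightarrow> (nat \<Rightarrow> real option) \<Rightarrow> real free_mod" where
  "canon1 J d = \<lparr>basis = {j \<in> J. d j \<noteq> None}, grade = (\<lambda>j. the (d j))\<rparr>"

definition canon_p :: "nat set \<Rightarrow> (nat \<Rightarrow> real option) \<Rightarrow> nat \<Rightarrow> nat \<Rightarrow> 'k::{zero,one}" where
  "canon_p J d i j = (if i = j \<and> j \<in> J \<and> d j \<noteq> None then 1 else 0)"

definition canon_eps :: "(nat \<Rightarrow> real) \<Rightarrow> (nat \<Rightarrow> real option) \<Rightarrow> real \<Rightarrow> (nat \<Rightarrow> 'k::zero) \<Rightarrow> (nat \<Rightarrow> 'k)" where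
  "canon_eps b d t w = bmap b d t w"

text \<open>M = coker p_1, so M^L = coker p_1^L.  We encode phi : M^L -> direct sum via the composite
 phi o eps^L, a family of maps phit t : F_0^L(t) -> (direct sum)(t).  It is a natural linear
 map vanishing exactly on im p_1^L (so it descends to an injective map on M^L) and is
 surjective at every t, i.e. phi is an isomorphism of persistence modules.\<close>
definition bar_iso ::
  "real free_mod \<Rightarrow> real free_mod \<Rightarrow> (nat \<Rightarrow> nat \<Rightarrow> 'k::field) \<Rightarrow>
   nat set \<Rightarrow> (nat \<Rightarrow> real) \<Rightarrow> (nat \<Rightarrow> real option) \<Rightarrow> (real \<Rightarrow> (nat \<Rightarrow> 'k) \<Rightarrow> (nat \<Rightarrow> 'k)) \<Rightarrow> bool" where
  "bar_iso F0 F1 p1 J b d phit \<longleftrightarrow>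
     (\<forall>t. \<forall>v\<in>fcomp F0 t. phit t v \<in> bcomp J b d t) \<and>
     (\<forall>t. \<forall>v\<in>fcomp F0 t. \<forall>w\<in>fcomp F0 t. phit t (\<lambda>i. v i + w i) = (\<lambda>j. phit t v j + phit t w j)) \<and>
     (\<forall>t c. \<forall>v\<in>fcomp F0 t. phit t (\<lambda>i. c * v i) = (\<lambda>j. c * phit t v j)) \<and>
     (\<forall>s t. s \<le> t \<longrightarrow> (\<forall>v\<in>fcomp F0 s. phit t v = bmap b d t (phit s v))) \<and>
     (\<forall>t. \<forall>v\<in>fcomp F0 t. phit t v = (\<lambda>j. 0) \<longleftrightarrow> v \<in> himg F1 p1 t) \<and>
     (\<forall>t. bcomp J b d t \<subseteq> phit t ` fcomp F0 t)"

text \<open>(Phi0, Phi1) is a chain map F^L -> F' lifting phi (in degrees 0 and 1).\<close>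
definition lifts ::
  "real free_mod \<Rightarrow> real free_mod \<Rightarrow> (nat \<Rightarrow> nat \<Rightarrow> 'k::field) \<Rightarrow>
   nat set \<Rightarrow> (nat \<Rightarrow> real) \<Rightarrow> (nat \<Rightarrow> real option) \<Rightarrow> (real \<Rightarrow> (nat \<Rightarrow> 'k) \<Rightarrow> (nat \<Rightarrow> 'k)) \<Rightarrow>
   (nat \<Rightarrow> nat \<Rightarrow> 'k) \<Rightarrow> (nat \<Rightarrow> nat \<Rightarrow> 'k) \<Rightarrow> bool" where
  "lifts F0 F1 p1 J b d phit Phi0 Phi1 \<longleftrightarrow>
     is_fhom F0 (canon0 J b) Phi0 \<and> is_fhom F1 (canon1 J d) Phi1 \<and>
     (\<forall>t. \<forall>v\<in>fcomp F0 t. canon_eps b d t (happ F0 Phi0 v) = phit t v) \<and>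
     (\<forall>t. \<forall>u\<in>fcomp F1 t.
        happ (canon1 J d) (canon_p J d) (happ F1 Phi1 u) = happ F0 Phi0 (happ F1 p1 u))"

definition generates :: "real free_mod \<Rightarrow> (nat \<Rightarrow> real) \<Rightarrow> (nat \<Rightarrow> nat \<Rightarrow> 'k::zero) \<Rightarrow> nat \<Rightarrow> nat \<Rightarrow> bool" where
  "generates F0 b Phi0 i j \<longleftrightarrow> grade F0 i = b j \<and> Phi0 j i \<noteq> 0"

definition kills :: "real free_mod \<Rightarrow> (nat \<Rightarrow> real option) \<Rightarrow> (nat \<Rightarrow> nat \<Rightarrow> 'k::zero) \<Rightarrow> nat \<Rightarrow> nat \<Rightarrow> bool" where
  "kills F1 d Phi1 r j \<longleftrightarrow> d j = Some (grade F1 r) \<and> Phi1 j r \<noteq> 0"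

definition fixed_ok ::
  "real free_mod \<Rightarrow> real free_mod \<Rightarrow> nat set \<Rightarrow> (nat \<Rightarrow> real) \<Rightarrow> (nat \<Rightarrow> real option) \<Rightarrow>
   (nat \<Rightarrow> nat \<Rightarrow> 'k::zero) \<Rightarrow> (nat \<Rightarrow> nat \<Rightarrow> 'k) \<Rightarrow> bool" where
  "fixed_ok F0 F1 J b d Phi0 Phi1 \<longleftrightarrow>
     (\<forall>j\<in>J. \<exists>!i. i \<in> basis F0 \<and> generates F0 b Phi0 i j) \<and>
     (\<forall>j\<in>J. d j \<noteq> None \<longrightarrow> (\<exists>!r. r \<in> basis F1 \<and> kills F1 d Phi1 r j)) \<and>
     (\<forall>i\<in>basis F0. \<exists>j\<in>J. generates F0 b Phi0 i j)"

end

theory Submission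
  imports Defs
begin

lemma lineL_le_iff: "p \<le> lineL a t \<longleftrightarrow> (\<forall>k. p$k \<le> a$k + t)"
  by (simp add: lineL_def ones_def less_eq_vec_def)

lemma push_par_eq: "push_par a p = Max (range (\<lambda>k. p$k - a$k))"
  unfolding push_par_def
proof (rule Least_equality)
  show "p \<le> lineL a (Max (range (\<lambda>k. p $ k - a $ k)))"
    unfolding lineL_le_iff
  proof
    fix k
    have "p $ k - a $ k \<le> Max (range (\<lambda>k. p $ k - a $ k))" by (rule Max_ge) auto
    then show "p $ k \<le> a $ k + Max (range (\<lambda>k. p $ k - a $ k))" by linarith
  qed
  show "\<And>y. p \<le> lineL a y \<Longrightarrow> Max (range (\<lambda>k. p $ k - a $ k)) \<le> y"
    unfolding lineL_le_iff by (auto simp: algebra_simps)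
qed

lemma push_le: "push_par a p \<le> t \<longleftrightarrow> p \<le> lineL a t"
  by (auto simp: push_par_eq lineL_le_iff algebra_simps)

lemma push_self: "push_par a a = 0"
proof -
  have "push_par a a \<le> 0" by (simp add: push_le lineL_def)
  moreover have "\<not> push_par a a < 0"
  proof
    assume "push_par a a < 0"
    then have "a \<le> lineL a (push_par a a)" using push_le by blast
    then have "a$undefined \<le> a$undefined + push_par a a" using lineL_le_iff by blast
    with \<open>push_par a a < 0\<close> show False by simp
  qed
  ultimately show ?thesis by simp
qed

lemma push_le0: "g \<le> a \<Longrightarrow> push_par a g \<le> 0"
  by (simp add: push_le lineL_def)

lemma lineL_neg: "t < 0 \<Longrightarrow> lineL a t \<le> a"
  by (simp add: lineL_le_iff[symmetric, of "lineL a t" a t, simplified lineL_le_iff] lineL_def ones_def less_eq_vec_def)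

lemma happ_restr: "happ (restr a F) C = happ F C"
  by (rule ext) (simp add: happ_def restr_def)

lemma happ_gen: "r \<in> basis F \<Longrightarrow> finite (basis F) \<Longrightarrow> happ F C (gen r) = (\<lambda>i. C i r)"
  by (auto simp: happ_def gen_def if_distrib[of "(*) _"] cong: if_cong)

lemma happ_diff: "happ F C (\<lambda>k. x k - y k) i = happ F C x i - happ F C y i"
  by (simp add: happ_def sum_subtractf right_diff_distrib)

lemma happ_canon: "finite J \<Longrightarrow> happ (canon1 J d) (canon_p J d) x j = (if j \<in> J \<and> d j \<noteq> None then x j else 0)"
  by (auto simp: happ_def canon1_def canon_p_def if_distrib[of "\<lambda>c. c * _"] cong: if_cong)


theorem mainTheorem16:
  fixes F :: "nat \<Rightarrow> (real^'n) free_mod"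
    and p :: "nat \<Rightarrow> nat \<Rightarrow> nat \<Rightarrow> 'k::field"
    and r :: nat
  assumes res: "min_free_res F p"
    and r_gen: "r \<in> basis (F 1)"
  shows "gen r \<notin> hker (restr (grade (F 1) r) (F 1)) (p 1)
                    (grade (restr (grade (F 1) r) (F 1)) r)
     \<and> (\<forall>J b d phit Phi0 Phi1.
           J = {..<card (basis (F 0))} \<longrightarrow>
           (\<forall>j\<in>J. \<forall>e. d j = Some e \<longrightarrow> b j \<le> e) \<longrightarrow>
           bar_iso (restr (grade (F 1) r) (F 0)) (restr (grade (F 1) r) (F 1)) (p 1) J b d phit \<longrightarrow>
           lifts (restr (grade (F 1) r) (F 0)) (restr (grade (F 1) r) (F 1)) (p 1) J b d phit Phi0 Phi1 \<longrightarrow>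
           fixed_ok (restr (grade (F 1) r) (F 0)) (restr (grade (F 1) r) (F 1)) J b d Phi0 Phi1 \<longrightarrow>
           (\<exists>j\<in>J. kills (restr (grade (F 1) r) (F 1)) d Phi1 r j))"
proof -
  define a where "a = grade (F 1) r"
  define F0L where "F0L = restr a (F 0)"
  define F1L where "F1L = restr a (F 1)"
  have fin: "\<And>i. finite (basis (F i))" using res unfolding min_free_res_def free_ok_def by blast
  have "is_fhom (F 1) (F (1-1)) (p 1)" using res unfolding min_free_res_def by blast
  then have hom1: "is_fhom (F 1) (F 0) (p 1)" by simp
  have ex1: "\<And>t. hker (F 1) (p 1) t = himg (F 2) (p 2) t"
  proof -
    fix t
    have "hker (F 1) (p 1) t = himg (F (1+1)) (p (1+1)) t" using res unfolding min_free_res_def by blast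
    then show "hker (F 1) (p 1) t = himg (F 2) (p 2) t" by (simp add: numeral_2_eq_2)
  qed
  have min2: "\<And>t. himg (F 2) (p 2) t \<subseteq> mcomp (F 1) t"
  proof -
    fix t
    have "\<forall>i\<ge>1. \<forall>t. himg (F i) (p i) t \<subseteq> mcomp (F (i - 1)) t" using res unfolding min_free_res_def by blast
    then have "\<forall>t. himg (F 2) (p 2) t \<subseteq> mcomp (F (2-1)) t" by (erule_tac x=2 in allE) simp
    then have "himg (F 2) (p 2) t \<subseteq> mcomp (F (2-1)) t" by blast
    then show "himg (F 2) (p 2) t \<subseteq> mcomp (F 1) t" by simp
  qed
  have K: "\<exists>i. happ (F 1) (p 1) (\<lambda>k. gen r k - u k) i \<noteq> 0"
    if u1: "u \<in> fcomp (F 1) a" and u2: "u r = 0" for u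
  proof (rule ccontr)
    assume "\<not> ?thesis"
    moreover have "(\<lambda>k. gen r k - u k) \<in> fcomp (F 1) a"
      using u1 r_gen unfolding fcomp_def gen_def a_def by auto
    ultimately have "(\<lambda>k. gen r k - u k) \<in> hker (F 1) (p 1) a" unfolding hker_def by auto
    then have "(\<lambda>k. gen r k - u k) \<in> mcomp (F 1) a" using ex1 min2 by blast
    then have "grade (F 1) r \<noteq> a" unfolding mcomp_def using u2 by (auto simp: gen_def)
    then show False by (simp add: a_def)
  qed
  define w where "w = (\<lambda>i. p 1 i r)"
  have hw: "happ (F 1) (p 1) (gen r) = w" using happ_gen[OF r_gen fin] w_def by simp
  have wne: "\<exists>i. w i \<noteq> 0"
  proof -
    obtain i where "happ (F 1) (p 1) (\<lambda>k. gen r k - 0) i \<noteq> 0"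
      using K[of "\<lambda>_. 0"] by (auto simp: fcomp_def)
    then show ?thesis using hw by auto
  qed
  have gr0: "grade F1L r = 0" by (simp add: F1L_def restr_def push_self a_def)
  have part1: "gen r \<notin> hker F1L (p 1) (grade F1L r)"
  proof
    assume "gen r \<in> hker F1L (p 1) (grade F1L r)"
    then have "\<forall>i. happ F1L (p 1) (gen r) i = 0" by (simp add: hker_def)
    then have "\<forall>i. w i = 0" using hw by (simp add: F1L_def happ_restr)
    with wne show False by blast
  qed
  have wsupp: "w i \<noteq> 0 \<Longrightarrow> i \<in> basis (F 0) \<and> grade (F 0) i \<le> a" for i
    using hom1 unfolding is_fhom_def w_def a_def by blast
  have wsupp0: "grade F0L i \<le> 0" if "w i \<noteq> 0" for i
    using wsupp[OF that] push_le0[of "grade (F 0) i" a] by (simp add: F0L_def restr_def)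
  have genF1L: "gen r \<in> fcomp F1L 0"
    using r_gen gr0 by (auto simp: fcomp_def gen_def F1L_def restr_def)
  have part2: "\<exists>j\<in>J. kills F1L d Phi1 r j"
    if hJ: "J = {..<card (basis (F 0))}" and hbd: "\<forall>j\<in>J. \<forall>e. d j = Some e \<longrightarrow> b j \<le> e"
      and iso: "bar_iso F0L F1L (p 1) J b d phit"
      and lf: "lifts F0L F1L (p 1) J b d phit Phi0 Phi1"
      and fx: "fixed_ok F0L F1L J b d Phi0 Phi1"
    for J b d phit Phi0 Phi1
  proof (rule ccontr)
    assume nk: "\<not> ?thesis"
    have finJ: "finite J" using hJ by simp
    have wf0: "w \<in> fcomp F0L t" if "\<And>i. w i \<noteq> 0 \<Longrightarrow> grade F0L i \<le> t" for t
      using that wsupp by (auto simp: fcomp_def F0L_def restr_def)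
    have wimg: "w \<in> himg F1L (p 1) 0"
      using genF1L hw unfolding himg_def F1L_def happ_restr by auto
    have phi0: "phit 0 w = (\<lambda>j. 0)"
      using iso wimg wf0[of 0] wsupp0 unfolding bar_iso_def by blast
    define v where "v = happ F0L Phi0 w"
    have phit_v: "phit t w = bmap b d t v" if "w \<in> fcomp F0L t" for t
      using lf that unfolding lifts_def canon_eps_def v_def by auto
    have hom0: "is_fhom F0L (canon0 J b) Phi0" using lf unfolding lifts_def by blast
    have homP1: "is_fhom F1L (canon1 J d) Phi1" using lf unfolding lifts_def by blast
    have vJ: "j \<in> J \<and> b j \<le> 0" if "v j \<noteq> 0" for j
    proof -
      from that obtain i where "i \<in> basis F0L" "Phi0 j i * w i \<noteq> 0"
        unfolding v_def happ_def by (meson sum.not_neutral_contains_not_neutral)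
      then have "Phi0 j i \<noteq> 0" "w i \<noteq> 0" by auto
      with hom0 wsupp0 show ?thesis unfolding is_fhom_def canon0_def by force
    qed
    have vd: "\<exists>e. d j = Some e \<and> e \<le> 0" if "v j \<noteq> 0" for j
    proof -
      have "bmap b d 0 v j = 0" using phi0 phit_v[OF wf0[of 0]] wsupp0 by metis
      then have "\<not> in_bar b d j 0" using that by (auto simp: bmap_def split: if_splits)
      then show ?thesis using vJ[OF that] by (cases "d j") (auto simp: in_bar_def)
    qed
    have vP: "Phi1 j r = v j" if "v j \<noteq> 0" for j
    proof -
      have "happ (canon1 J d) (canon_p J d) (happ F1L Phi1 (gen r)) = happ F0L Phi0 (happ F1L (p 1) (gen r))"
        using lf genF1L unfolding lifts_def by blast
      moreover have "happ F1L (p 1) (gen r) = w" using hw by (simp add: F1L_def happ_restr)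
      moreover have "happ F1L Phi1 (gen r) = (\<lambda>i. Phi1 i r)"
        using happ_gen[of r F1L] r_gen fin by (simp add: F1L_def restr_def)
      ultimately have "happ (canon1 J d) (canon_p J d) (\<lambda>i. Phi1 i r) j = v j" by (simp add: v_def)
      then show ?thesis using that happ_canon[OF finJ] by (metis (no_types, lifting))
    qed
    have neg: "\<exists>e. d j = Some e \<and> e < 0" if vj: "v j \<noteq> 0" for j
    proof -
      obtain e where e: "d j = Some e" "e \<le> 0" using vd[OF vj] by blast
      have "e \<noteq> 0"
      proof
        assume "e = 0"
        then have "kills F1L d Phi1 r j" using e gr0 vP[OF vj] vj by (simp add: kills_def)
        then show False using nk vJ[OF vj] by blast
      qed
      with e show ?thesis by auto
    qed
    show False
    proof (cases "\<exists>i. w i \<noteq> 0 \<and> grade F0L i = 0")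
      case True
      then obtain i where i: "w i \<noteq> 0" "grade F0L i = 0" by blast
      have iB: "i \<in> basis F0L" using wsupp[OF i(1)] by (simp add: F0L_def restr_def)
      then obtain j where j: "j \<in> J" "generates F0L b Phi0 i j"
        using fx unfolding fixed_ok_def by blast
      have uniq: "\<And>i'. i' \<in> basis F0L \<Longrightarrow> generates F0L b Phi0 i' j \<Longrightarrow> i' = i"
        using fx j iB unfolding fixed_ok_def by metis
      have bj: "b j = 0" using j i unfolding generates_def by simp
      have other: "Phi0 j i' * w i' = 0" if "i' \<in> basis F0L - {i}" for i'
      proof (rule ccontr)
        assume "Phi0 j i' * w i' \<noteq> 0"
        then have "Phi0 j i' \<noteq> 0" "w i' \<noteq> 0" by auto
        then have "b j \<le> grade F0L i'" "grade F0L i' \<le> 0"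
          using hom0 wsupp0 unfolding is_fhom_def canon0_def by force+
        then have "generates F0L b Phi0 i' j" using bj \<open>Phi0 j i' \<noteq> 0\<close> unfolding generates_def by simp
        then show False using uniq that by blast
      qed
      have finB: "finite (basis F0L)" using fin by (simp add: F0L_def restr_def)
      have vsum: "v j = Phi0 j i * w i + (\<Sum>i'\<in>basis F0L - {i}. Phi0 j i' * w i')"
        unfolding v_def happ_def using sum.remove[OF finB iB] by blast
      have "(\<Sum>i'\<in>basis F0L - {i}. Phi0 j i' * w i') = 0"
        by (rule sum.neutral) (use other in blast)
      with vsum have "v j = Phi0 j i * w i" by simp
      then have "v j \<noteq> 0" using j(2) i(1) unfolding generates_def by simp
      then obtain e where "d j = Some e" "e < 0" using neg by blast
      then show False using hbd j(1) bj by force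
    next
      case False
      have wneg: "w i \<noteq> 0 \<Longrightarrow> grade F0L i < 0" for i
        using False wsupp0[of i] by force
      define supp where "supp = {i \<in> basis F0L. w i \<noteq> 0}"
      have finS: "finite supp" using fin by (simp add: supp_def F0L_def restr_def)
      have suppne: "supp \<noteq> {}" using wne wsupp by (auto simp: supp_def F0L_def restr_def)
      define g where "g = Max (grade F0L ` supp)"
      have g0: "g < 0" unfolding g_def using finS suppne wneg by (auto simp: supp_def)
      have gge: "w i \<noteq> 0 \<Longrightarrow> grade F0L i \<le> g" for i
        unfolding g_def using finS wsupp by (auto simp: supp_def F0L_def restr_def)
      define E where "E = (\<lambda>j. the (d j)) ` {j. v j \<noteq> 0}"
      have finE: "finite E" unfolding E_def
        by (rule finite_imageI, rule finite_subset[OF _ finJ]) (use vJ in blast)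
      define t where "t = Max (insert g E)"
      have Eneg: "x \<in> E \<Longrightarrow> x < 0" for x using neg unfolding E_def by force
      have t0: "t < 0" unfolding t_def using finE g0 Eneg by simp
      have gt: "g \<le> t" unfolding t_def using finE by simp
      have Et: "x \<in> E \<Longrightarrow> x \<le> t" for x unfolding t_def using finE by simp
      have wft: "w \<in> fcomp F0L t" by (rule wf0) (use gge gt in force)
      have notimg: "w \<notin> himg F1L (p 1) t"
      proof
        assume "w \<in> himg F1L (p 1) t"
        then obtain u where u: "u \<in> fcomp F1L t" "happ F1L (p 1) u = w" unfolding himg_def by blast
        have uk: "k \<in> basis (F 1) \<and> grade (F 1) k \<le> a \<and> push_par a (grade (F 1) k) \<le> t" if "u k \<noteq> 0" for k
        proof -
          have "k \<in> basis (F 1)" "push_par a (grade (F 1) k) \<le> t"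
            using u(1) that by (auto simp: fcomp_def F1L_def restr_def)
          moreover then have "grade (F 1) k \<le> lineL a t" using push_le by blast
          ultimately show ?thesis using lineL_neg[OF t0, of a] order_trans by blast
        qed
        have u1: "u \<in> fcomp (F 1) a" using uk by (auto simp: fcomp_def)
        have u2: "u r = 0"
        proof (rule ccontr)
          assume "u r \<noteq> 0"
          then have "push_par a (grade (F 1) r) \<le> t" using uk by blast
          then show False using t0 by (simp add: a_def push_self)
        qed
        obtain i where "happ (F 1) (p 1) (\<lambda>k. gen r k - u k) i \<noteq> 0" using K[OF u1 u2] by blast
        then show False using u(2) hw happ_diff[of "F 1" "p 1" "gen r" u i]
          by (simp add: F1L_def happ_restr)
      qed
      have "phit t w \<noteq> (\<lambda>j. 0)" using iso wft notimg unfolding bar_iso_def by blast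
      then obtain j where j: "bmap b d t v j \<noteq> 0" using phit_v[OF wft] by auto
      then have jb: "in_bar b d j t" "v j \<noteq> 0" by (auto simp: bmap_def split: if_splits)
      obtain e where e: "d j = Some e" "e < 0" using neg[OF jb(2)] by blast
      have "e \<in> E" unfolding E_def using jb(2) e(1) by force
      then have "e \<le> t" using Et by blast
      then show False using jb(1) e(1) by (simp add: in_bar_def)
    qed
  qed
  note p1' = part1[unfolded F1L_def a_def]
  note p2' = part2[unfolded F0L_def F1L_def a_def]
  show ?thesis
    apply (rule conjI)
     apply (rule p1')
    apply (intro allI impI)
    apply (rule p2')
        apply assumption
       apply assumption
      apply assumption
     apply assumption
    apply assumption
    done
qed

end
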